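(* Let $k$ be an algebraically closed complete non-Archimedean field and $A$ a strictly affinoid $k$-algebra. Let $\mathfrak U$ be a finite open cover of $\mathcal M(A)$. Then for every sufficiently small $\varepsilon\in|k^*|$ there is a finite cover $\mathfrak V$ of $\mathrm{Id}(A_\varepsilon)$ by constructible sets (clopen for the constructible topology) such that $\{\mathrm{red}_\varepsilon^{-1}(U):U\in\mathfrak V\}$ refines $\mathfrak U$.
   Context: $k^\circ=\{|z|\le1\}$; $\rho(a)=\lim_n\|a^n\|^{1/n}$ is the spectral norm on $A$, $A^\circ=\{\rho\le1\}$, $A_\varepsilon=A^\circ/\{\rho<\varepsilon\}$. $\mathcal M(A)$ is the Berkovich spectrum. $\mathrm{Id}(A_\varepsilon)$ is the set of proper ideals of $A_\varepsilon$ with the constructible topology (induced from the product topology on $\{0,1\}^{A_\varepsilon}$; constructible sets are finite Boolean combinations of sets $\{\mathfrak A: g\in\mathfrak A\}$). The $\varepsilon$-reduction map $\mathrm{red}_\varepsilon\colon\mathcal M(A)\to\mathrm{Id}(A_\varepsilon)$ sends $x$ to the image in $A_\varepsilon$ of the ideal $\{a\in A^\circ:|a(x)|<\varepsilon\}$. *)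

theory Defs
  imports "HOL-Analysis.Analysis" "HOL-Computational_Algebra.Polynomial" "HOL-Algebra.QuotRing"
begin

definition nonarch_abs :: "('k::field \<Rightarrow> real) \<Rightarrow> bool" where
  "nonarch_abs v \<longleftrightarrow> (\<forall>x. 0 \<le> v x) \<and> (\<forall>x. v x = 0 \<longleftrightarrow> x = 0)
     \<and> (\<forall>x y. v (x * y) = v x * v y) \<and> (\<forall>x y. v (x + y) \<le> max (v x) (v y))"

definition complete_abs :: "('k::field \<Rightarrow> real) \<Rightarrow> bool" where
  "complete_abs v \<longleftrightarrow> (\<forall>s::nat \<Rightarrow> 'k.
     (\<forall>e>0. \<exists>N. \<forall>m\<ge>N. \<forall>n\<ge>N. v (s m - s n) < e) \<longrightarrow>
     (\<exists>L. \<forall>e>0. \<exists>N. \<forall>n\<ge>N. v (s n - L) < e))"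

definition nontrivial_abs :: "('k::field \<Rightarrow> real) \<Rightarrow> bool" where
  "nontrivial_abs v \<longleftrightarrow> (\<exists>x. v x \<noteq> 0 \<and> v x \<noteq> 1)"

definition alg_closed :: "'k::field itself \<Rightarrow> bool" where
  "alg_closed _ \<longleftrightarrow> (\<forall>p :: 'k poly. 0 < degree p \<longrightarrow> (\<exists>x. poly p x = 0))"

definition multiidx :: "nat \<Rightarrow> (nat \<Rightarrow> nat) set" where
  "multiidx n = {\<alpha>. \<forall>i\<ge>n. \<alpha> i = 0}"

text \<open>Restricted power series: coefficient families tending to 0.\<close>
definition tate_alg :: "('k::field \<Rightarrow> real) \<Rightarrow> nat \<Rightarrow> ((nat \<Rightarrow> nat) \<Rightarrow> 'k) set" where
  "tate_alg v n = {f. (\<forall>\<alpha>. \<alpha> \<notin> multiidx n \<longrightarrow> f \<alpha> = 0) \<and> (\<forall>e>0. finite {\<alpha>. e \<le> v (f \<alpha>)})}"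

definition gauss_norm :: "('k::field \<Rightarrow> real) \<Rightarrow> ((nat \<Rightarrow> nat) \<Rightarrow> 'k) \<Rightarrow> real" where
  "gauss_norm v f = Sup (range (\<lambda>\<alpha>. v (f \<alpha>)))"

definition tate_add :: "((nat \<Rightarrow> nat) \<Rightarrow> 'k::field) \<Rightarrow> ((nat \<Rightarrow> nat) \<Rightarrow> 'k) \<Rightarrow> ((nat \<Rightarrow> nat) \<Rightarrow> 'k)" where
  "tate_add f g = (\<lambda>\<alpha>. f \<alpha> + g \<alpha>)"

definition tate_mult :: "nat \<Rightarrow> ((nat \<Rightarrow> nat) \<Rightarrow> 'k::field) \<Rightarrow> ((nat \<Rightarrow> nat) \<Rightarrow> 'k) \<Rightarrow> ((nat \<Rightarrow> nat) \<Rightarrow> 'k)" where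
  "tate_mult n f g = (\<lambda>\<gamma>. \<Sum>(\<alpha>, \<beta>) \<in> {(\<alpha>, \<beta>). \<alpha> \<in> multiidx n \<and> \<beta> \<in> multiidx n \<and> (\<lambda>i. \<alpha> i + \<beta> i) = \<gamma>}.
                         f \<alpha> * g \<beta>)"

definition tate_const :: "'k::field \<Rightarrow> ((nat \<Rightarrow> nat) \<Rightarrow> 'k)" where
  "tate_const c = (\<lambda>\<alpha>. if \<alpha> = (\<lambda>_. 0) then c else 0)"

text \<open>Surjective k-algebra homomorphism T_n \<rightarrow> A (A = UNIV of a type, k-structure via emb).\<close>
definition tate_epi :: "('k::field \<Rightarrow> real) \<Rightarrow> ('k \<Rightarrow> 'a::comm_ring_1) \<Rightarrow> nat
    \<Rightarrow> (((nat \<Rightarrow> nat) \<Rightarrow> 'k) \<Rightarrow> 'a) \<Rightarrow> bool" where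
  "tate_epi v emb n \<phi> \<longleftrightarrow>
     (\<forall>f\<in>tate_alg v n. \<forall>g\<in>tate_alg v n.
        \<phi> (tate_add f g) = \<phi> f + \<phi> g \<and> \<phi> (tate_mult n f g) = \<phi> f * \<phi> g)
   \<and> (\<forall>c. \<phi> (tate_const c) = emb c)
   \<and> (\<forall>a. \<exists>f\<in>tate_alg v n. \<phi> f = a)"

definition residue_norm :: "('k::field \<Rightarrow> real) \<Rightarrow> nat \<Rightarrow> (((nat \<Rightarrow> nat) \<Rightarrow> 'k) \<Rightarrow> 'a) \<Rightarrow> 'a \<Rightarrow> real" where
  "residue_norm v n \<phi> a = Inf (gauss_norm v ` {f \<in> tate_alg v n. \<phi> f = a})"

definition k_alg_norm :: "('k::field \<Rightarrow> real) \<Rightarrow> ('k \<Rightarrow> 'a::comm_ring_1) \<Rightarrow> ('a \<Rightarrow> real) \<Rightarrow> bool" where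
  "k_alg_norm v emb nA \<longleftrightarrow>
     emb 1 = 1 \<and> (\<forall>c d. emb (c + d) = emb c + emb d \<and> emb (c * d) = emb c * emb d)
   \<and> (\<forall>a. 0 \<le> nA a) \<and> (\<forall>a. nA a = 0 \<longleftrightarrow> a = 0)
   \<and> (\<forall>a b. nA (a + b) \<le> max (nA a) (nA b)) \<and> (\<forall>a b. nA (a * b) \<le> nA a * nA b)
   \<and> (\<forall>c a. nA (emb c * a) = v c * nA a)"

text \<open>A (with k-structure emb and norm nA) is strictly k-affinoid: there is an admissible
  epimorphism T_n \<rightarrow> A, i.e. a surjective k-algebra map whose residue norm is equivalent to nA
  (hence nA is a complete norm).\<close>
definition strictly_affinoid :: "('k::field \<Rightarrow> real) \<Rightarrow> ('k \<Rightarrow> 'a::comm_ring_1) \<Rightarrow> ('a \<Rightarrow> real) \<Rightarrow> bool" where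
  "strictly_affinoid v emb nA \<longleftrightarrow> k_alg_norm v emb nA \<and>
     (\<exists>n \<phi>. tate_epi v emb n \<phi> \<and>
        (\<exists>c C. 0 < c \<and> 0 < C \<and> (\<forall>a. c * residue_norm v n \<phi> a \<le> nA a \<and> nA a \<le> C * residue_norm v n \<phi> a)))"

definition spectral_norm :: "('a::comm_ring_1 \<Rightarrow> real) \<Rightarrow> 'a \<Rightarrow> real" where
  "spectral_norm nA a = lim (\<lambda>m. root (Suc m) (nA (a ^ Suc m)))"

definition berk_spectrum :: "('a::comm_ring_1 \<Rightarrow> real) \<Rightarrow> ('a \<Rightarrow> real) set" where
  "berk_spectrum nA = {x. (\<forall>a. 0 \<le> x a) \<and> x 0 = 0 \<and> x 1 = 1
      \<and> (\<forall>a b. x (a + b) \<le> x a + x b) \<and> (\<forall>a b. x (a * b) = x a * x b)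
      \<and> (\<exists>C. \<forall>a. x a \<le> C * nA a)}"

definition berk_top :: "('a::comm_ring_1 \<Rightarrow> real) \<Rightarrow> ('a \<Rightarrow> real) topology" where
  "berk_top nA = subtopology (product_topology (\<lambda>_. euclideanreal) UNIV) (berk_spectrum nA)"

definition A_circ :: "('a::comm_ring_1 \<Rightarrow> real) \<Rightarrow> 'a ring" where
  "A_circ nA = \<lparr>carrier = {a. spectral_norm nA a \<le> 1}, mult = (*), one = 1, zero = 0, add = (+)\<rparr>"

definition I_eps :: "('a::comm_ring_1 \<Rightarrow> real) \<Rightarrow> real \<Rightarrow> 'a set" where
  "I_eps nA \<epsilon> = {a. spectral_norm nA a < \<epsilon>}"

definition A_eps :: "('a::comm_ring_1 \<Rightarrow> real) \<Rightarrow> real \<Rightarrow> 'a set ring" where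
  "A_eps nA \<epsilon> = A_circ nA Quot I_eps nA \<epsilon>"

definition Id_eps :: "('a::comm_ring_1 \<Rightarrow> real) \<Rightarrow> real \<Rightarrow> 'a set set set" where
  "Id_eps nA \<epsilon> = {J. ideal J (A_eps nA \<epsilon>) \<and> J \<noteq> carrier (A_eps nA \<epsilon>)}"

definition red_eps :: "('a::comm_ring_1 \<Rightarrow> real) \<Rightarrow> real \<Rightarrow> ('a \<Rightarrow> real) \<Rightarrow> 'a set set" where
  "red_eps nA \<epsilon> x = (\<lambda>a. a_r_coset (A_circ nA) (I_eps nA \<epsilon>) a) ` {a \<in> carrier (A_circ nA). x a < \<epsilon>}"

inductive_set bool_comb :: "'b set \<Rightarrow> 'b set set \<Rightarrow> 'b set set" for X B where
  basic: "S \<in> B \<Longrightarrow> S \<in> bool_comb X B"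
| empty: "{} \<in> bool_comb X B"
| compl: "S \<in> bool_comb X B \<Longrightarrow> X - S \<in> bool_comb X B"
| union: "S \<in> bool_comb X B \<Longrightarrow> T \<in> bool_comb X B \<Longrightarrow> S \<union> T \<in> bool_comb X B"

definition constructible_Id :: "('a::comm_ring_1 \<Rightarrow> real) \<Rightarrow> real \<Rightarrow> 'a set set set \<Rightarrow> bool" where
  "constructible_Id nA \<epsilon> V \<longleftrightarrow> V \<in> bool_comb (Id_eps nA \<epsilon>)
      {{J \<in> Id_eps nA \<epsilon>. g \<in> J} | g. g \<in> carrier (A_eps nA \<epsilon>)}"

end

theory Submission
  imports Defs
begin

definition snorm :: "('a::comm_ring_1 \<Rightarrow> real) \<Rightarrow> bool" where
  "snorm p \<longleftrightarrow> (\<forall>a. 0 \<le> p a) \<and> p 0 = 0 \<and> (\<forall>a b. p (a+b) \<le> max (p a) (p b))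
     \<and> (\<forall>a b. p (a*b) \<le> p a * p b)"

lemma snormD:
  assumes "snorm p"
  shows "0 \<le> p a" "p 0 = 0" "p (a+b) \<le> max (p a) (p b)" "p (a*b) \<le> p a * p b"
  using assms unfolding snorm_def by auto

lemma pow_mq_le:
  fixes p :: "'a::comm_ring_1 \<Rightarrow> real"
  assumes nn: "\<And>x. 0 \<le> p x" and sm: "\<And>x y. p (x*y) \<le> p x * p y" and q: "q \<ge> 1"
  shows "p (a^(m*q)) \<le> p (a^m) ^ q"
  using q
proof (induction q rule: dec_induct)
  case base then show ?case by simp
next
  case (step q)
  have "p (a^(m*Suc q)) = p (a^(m*q) * a^m)" by (simp add: power_add mult.commute)
  also have "\<dots> \<le> p (a^(m*q)) * p (a^m)" by (rule sm)
  also have "\<dots> \<le> p (a^m)^q * p (a^m)" using step nn by (simp add: mult_right_mono)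
  finally show ?case by (simp add: mult.commute)
qed

lemma pow_le_pow:
  fixes p :: "'a::comm_ring_1 \<Rightarrow> real"
  assumes nn: "\<And>x. 0 \<le> p x" and sm: "\<And>x y. p (x*y) \<le> p x * p y" and q: "q \<ge> 1"
  shows "p (a^q) \<le> p a ^ q"
  using pow_mq_le[OF nn sm q, of a 1] by simp

lemma fekete:
  fixes p :: "'a::comm_ring_1 \<Rightarrow> real"
  assumes nn: "\<And>x. 0 \<le> p x" and sm: "\<And>x y. p (x*y) \<le> p x * p y"
  shows "(\<lambda>n. root n (p (a^n))) \<longlonglongrightarrow> (INF n\<in>{1..}. root n (p (a^n)))"
proof -
  define u where "u n = root n (p (a^n))" for n
  define L where "L = (INF n\<in>{1..}. u n)"
  have bdd: "bdd_below (u ` {1..})" unfolding u_def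
    by (rule bdd_belowI[of _ 0]) (auto intro: real_root_ge_zero nn)
  have low: "L \<le> u n" if "n \<ge> 1" for n unfolding L_def
    using that bdd by (intro cINF_lower) auto
  have "u \<longlonglongrightarrow> L"
  proof (rule order_tendstoI)
    fix y assume "y < L"
    then show "\<forall>\<^sub>F n in sequentially. y < u n"
      using low by (auto simp: eventually_sequentially intro: less_le_trans)
  next
    fix t assume "L < t"
    then obtain m where m: "m \<ge> 1" "u m < t" unfolding L_def
      using cINF_less_iff[of "{1..}" u t] bdd by auto
    define w where "w = u m"
    have w0: "0 \<le> w" unfolding w_def u_def by (intro real_root_ge_zero nn)
    have t0: "0 < t" using w0 m w_def by linarith
    have wm: "w^m = p (a^m)" unfolding w_def u_def using m nn by simp
    define K where "K r = (if r = 0 then 1 else p (a^r))" for r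
    have K0: "0 \<le> K r" for r unfolding K_def using nn by simp
    define Kb where "Kb = (\<Sum>r<m. K r / t^r)"
    have Kr: "K r \<le> Kb * t^r" if "r < m" for r
    proof -
      have "K r / t^r \<le> Kb" unfolding Kb_def
        by (rule member_le_sum) (use that K0 t0 in auto)
      then show ?thesis using t0 by (simp add: field_simps)
    qed
    have Kb0: "0 \<le> Kb" unfolding Kb_def using K0 t0 by (intro sum_nonneg) auto
    define c where "c = (w/t)^m"
    have c0: "0 \<le> c" "c < 1" unfolding c_def using w0 t0 m w_def
      by (auto simp: power_less_one_iff)
    have "(\<lambda>q. c^q * Kb) \<longlonglongrightarrow> 0 * Kb"
      by (intro tendsto_intros LIMSEQ_power_zero) (use c0 in auto)
    then have "\<forall>\<^sub>F q in sequentially. c^q * Kb < 1"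
      by (intro order_tendstoD) auto
    then obtain Q where Q: "\<And>q. q \<ge> Q \<Longrightarrow> c^q * Kb < 1"
      by (auto simp: eventually_sequentially)
    show "\<forall>\<^sub>F n in sequentially. u n < t"
      unfolding eventually_sequentially
    proof (intro exI allI impI)
      fix N assume N: "m * (Q+1) \<le> N"
      define q where "q = N div m"
      define r where "r = N mod m"
      have Nqr: "N = m*q + r" unfolding q_def r_def by simp
      have q1: "q \<ge> Q+1" unfolding q_def using N m
        by (metis div_le_mono nonzero_mult_div_cancel_left not_one_le_zero)
      have rm: "r < m" unfolding r_def using m by simp
      have "m \<le> m * (Q+1)" by simp
      then have N1: "N \<ge> 1" using N m by linarith
      have "p (a^N) \<le> p (a^(m*q)) * K r"
      proof (cases "r = 0")
        case True then show ?thesis using Nqr K_def by simp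
      next
        case False
        then have "p (a^N) = p (a^(m*q) * a^r)" by (simp add: Nqr power_add)
        also have "\<dots> \<le> p (a^(m*q)) * K r" using sm False K_def by simp
        finally show ?thesis .
      qed
      also have "\<dots> \<le> p (a^m)^q * K r"
        using pow_mq_le[OF nn sm, of q a m] q1 K0 by (simp add: mult_right_mono)
      also have "\<dots> = t^(m*q) * c^q * K r"
        unfolding c_def wm[symmetric] using t0
        by (simp add: power_mult power_divide field_simps)
      also have "\<dots> \<le> t^(m*q) * c^q * (Kb * t^r)"
        using Kr[OF rm] t0 c0 by (intro mult_left_mono) auto
      also have "\<dots> = t^N * (c^q * Kb)" by (simp add: Nqr power_add)
      also have "\<dots> < t^N" using Q[of q] q1 t0 by simp
      finally have "p (a^N) < t^N" .
      moreover have "u N ^ N = p (a^N)" unfolding u_def using N1 nn by simp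
      ultimately have "u N ^ N < t ^ N" by simp
      then show "u N < t" using t0 by (meson less_le power_less_imp_less_base)
    qed
  qed
  then show ?thesis unfolding u_def L_def by simp
qed

lemma spec_props:
  assumes "snorm p"
  shows "(\<lambda>n. root n (p (a^n))) \<longlonglongrightarrow> spectral_norm p a"
    and "\<And>n. n \<ge> 1 \<Longrightarrow> spectral_norm p a \<le> root n (p (a^n))"
proof -
  have nn: "\<And>x. 0 \<le> p x" and sm: "\<And>x y. p (x*y) \<le> p x * p y" using snormD[OF assms] by auto
  define L where "L = (INF n\<in>{1..}. root n (p (a^n)))"
  have t: "(\<lambda>n. root n (p (a^n))) \<longlonglongrightarrow> L" unfolding L_def by (rule fekete[OF nn sm])
  then have "(\<lambda>m. root (Suc m) (p (a ^ Suc m))) \<longlonglongrightarrow> L" by (rule LIMSEQ_Suc)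
  then have "spectral_norm p a = L" unfolding spectral_norm_def by (rule limI)
  then show "(\<lambda>n. root n (p (a^n))) \<longlonglongrightarrow> spectral_norm p a" using t by simp
  have bdd: "bdd_below ((\<lambda>n. root n (p (a^n))) ` {1..})"
    by (rule bdd_belowI[of _ 0]) (auto intro: real_root_ge_zero nn)
  show "spectral_norm p a \<le> root n (p (a^n))" if "n \<ge> 1" for n
    using \<open>spectral_norm p a = L\<close> that bdd unfolding L_def by (auto intro: cINF_lower)
qed

lemma spec_nonneg: assumes "snorm p" shows "0 \<le> spectral_norm p a"
proof (rule LIMSEQ_le_const[OF spec_props(1)[OF assms]])
  show "\<exists>N. \<forall>n\<ge>N. 0 \<le> root n (p (a ^ n))"
    using snormD(1)[OF assms] by (auto intro!: real_root_ge_zero)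
qed

lemma spec_le: "snorm p \<Longrightarrow> spectral_norm p a \<le> p a"
  using spec_props(2)[where p=p and a=a and n=1] by simp

lemma spec_zero: "snorm p \<Longrightarrow> spectral_norm p 0 = 0"
  using spec_le[of p 0] spec_nonneg[of p 0] snormD(2)[of p] by simp

lemma spec_one: "snorm p \<Longrightarrow> 0 < p 1 \<Longrightarrow> spectral_norm p 1 = 1"
  using spec_props(1)[of p 1] LIMSEQ_root_const[of "p 1"] LIMSEQ_unique by auto

lemma spec_mult: assumes "snorm p" shows "spectral_norm p (a*b) \<le> spectral_norm p a * spectral_norm p b"
proof -
  have "(\<lambda>n. root n (p (a^n)) * root n (p (b^n))) \<longlonglongrightarrow> spectral_norm p a * spectral_norm p b"
    by (intro tendsto_mult spec_props[OF assms])
  moreover have "root n (p ((a*b)^n)) \<le> root n (p (a^n)) * root n (p (b^n))" if "n \<ge> 1" for n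
  proof -
    have "p ((a*b)^n) \<le> p (a^n) * p (b^n)" using snormD(4)[OF assms, of "a^n" "b^n"]
      by (simp add: power_mult_distrib)
    then show ?thesis using that by (simp add: real_root_mult[symmetric])
  qed
  ultimately show ?thesis
    using spec_props[OF assms, where a="a*b"]
    by (intro tendsto_le[OF _ _ spec_props(1)[OF assms]]) (auto simp: eventually_sequentially)
qed

lemma spec_bound:
  assumes "snorm p" "0 < d"
  shows "\<exists>C\<ge>1. \<forall>n. p (a^n) \<le> C * (spectral_norm p a + d)^n"
proof -
  let ?r = "spectral_norm p a"
  have r0: "0 \<le> ?r" by (rule spec_nonneg[OF assms(1)])
  have "\<forall>\<^sub>F n in sequentially. root n (p (a^n)) < ?r + d"
    using spec_props(1)[OF assms(1), of a] assms(2) by (intro order_tendstoD) auto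
  then obtain N0 where N0: "\<And>n. n \<ge> N0 \<Longrightarrow> root n (p (a^n)) < ?r + d"
    by (auto simp: eventually_sequentially)
  define C where "C = 1 + (\<Sum>n<N0 + 1. p (a^n) / (?r + d)^n)"
  have pos: "0 < ?r + d" using r0 assms by simp
  have S0: "0 \<le> (\<Sum>n<N0 + 1. p (a^n) / (?r + d)^n)"
    using pos snormD(1)[OF assms(1)] by (intro sum_nonneg) auto
  have "p (a^n) \<le> C * (?r + d)^n" for n
  proof (cases "n \<le> N0")
    case True
    then have "p (a^n) / (?r + d)^n \<le> (\<Sum>n<N0 + 1. p (a^n) / (?r + d)^n)"
      using pos snormD(1)[OF assms(1)] by (intro member_le_sum) auto
    then have "p (a^n) / (?r + d)^n \<le> C" unfolding C_def by simp
    then show ?thesis using pos by (simp add: field_simps)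
  next
    case False
    then have n1: "n \<ge> 1" "n \<ge> N0" by auto
    have "root n (p (a^n)) ^ n \<le> (?r + d)^n"
      using N0[OF n1(2)] by (intro power_mono) (auto intro: real_root_ge_zero snormD(1)[OF assms(1)])
    then have "p (a^n) \<le> (?r + d)^n" using n1 snormD(1)[OF assms(1)] by simp
    also have "\<dots> \<le> C * (?r + d)^n"
    proof -
      have "0 \<le> (C - 1) * (?r + d)^n" using S0 pos unfolding C_def by simp
      then show ?thesis by (simp add: algebra_simps)
    qed
    finally show ?thesis .
  qed
  moreover have "C \<ge> 1" using S0 unfolding C_def by simp
  ultimately show ?thesis by blast
qed

lemma snorm_sum_le:
  assumes "snorm p" "finite F" "\<And>k. k \<in> F \<Longrightarrow> p (f k) \<le> B" "0 \<le> B"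
  shows "p (sum f F) \<le> B"
  using assms(2,3)
proof (induction F rule: finite_induct)
  case empty then show ?case using snormD(2)[OF assms(1)] assms(4) by simp
next
  case (insert x F)
  have "p (sum f (insert x F)) = p (f x + sum f F)" using insert by simp
  also have "\<dots> \<le> max (p (f x)) (p (sum f F))" by (rule snormD(3)[OF assms(1)])
  also have "\<dots> \<le> B" using insert by auto
  finally show ?case .
qed

lemma snorm_of_nat_mult:
  assumes "snorm p" shows "p (of_nat j * z) \<le> p z"
proof -
  have "of_nat j * z = (\<Sum>i<j. z)" by simp
  then show ?thesis using snorm_sum_le[OF assms, of "{..<j}" "\<lambda>_. z" "p z"] snormD(1)[OF assms]
    by simp
qed

lemma spec_nonarch:
  assumes sn: "snorm p"
  shows "spectral_norm p (a+b) \<le> max (spectral_norm p a) (spectral_norm p b)"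
proof -
  let ?ra = "spectral_norm p a" and ?rb = "spectral_norm p b"
  define M where "M = max ?ra ?rb"
  have M0: "0 \<le> M" unfolding M_def using spec_nonneg[OF sn] by (simp add: le_max_iff_disj)
  have "spectral_norm p (a+b) \<le> M + d" if d: "0 < d" for d
  proof -
    obtain Ca where Ca: "Ca \<ge> 1" "\<And>n. p (a^n) \<le> Ca * (?ra + d)^n" using spec_bound[OF sn d] by blast
    obtain Cb where Cb: "Cb \<ge> 1" "\<And>n. p (b^n) \<le> Cb * (?rb + d)^n" using spec_bound[OF sn d] by blast
    have bnd: "p ((a+b)^n) \<le> (Ca*Cb) * (M + d)^n" for n
    proof -
      have "(a+b)^n = (\<Sum>k\<le>n. of_nat (n choose k) * a^k * b^(n-k))" by (rule binomial_ring)
      moreover have "p (of_nat (n choose k) * a^k * b^(n-k)) \<le> (Ca*Cb) * (M + d)^n" if "k \<in> {..n}" for k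
      proof -
        have "p (of_nat (n choose k) * a^k * b^(n-k)) \<le> p (of_nat (n choose k) * a^k) * p (b^(n-k))"
          by (rule snormD(4)[OF sn])
        also have "\<dots> \<le> p (a^k) * p (b^(n-k))"
          using snorm_of_nat_mult[OF sn] snormD(1)[OF sn] by (intro mult_right_mono) auto
        also have "\<dots> \<le> (Ca * (M+d)^k) * (Cb * (M+d)^(n-k))"
        proof (intro mult_mono)
          show "p (a^k) \<le> Ca * (M+d)^k" using Ca(2)[of k] Ca(1) spec_nonneg[OF sn, of a] d
            by (smt (verit) M_def max.cobounded1 mult_left_mono power_mono)
          show "p (b^(n-k)) \<le> Cb * (M+d)^(n-k)" using Cb(2)[of "n-k"] Cb(1) spec_nonneg[OF sn, of b] d
            by (smt (verit) M_def max.cobounded2 mult_left_mono power_mono)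
        qed (use Ca Cb M0 d snormD(1)[OF sn] in auto)
        also have "\<dots> = (Ca*Cb) * (M+d)^n" using that
          by (simp add: power_add[symmetric] field_simps)
        finally show ?thesis .
      qed
      ultimately show ?thesis
        using snorm_sum_le[OF sn, of "{..n}"] Ca Cb M0 d by simp
    qed
    have "(\<lambda>n. root n (Ca*Cb) * (M+d)) \<longlonglongrightarrow> 1 * (M+d)"
      using Ca Cb by (intro tendsto_intros LIMSEQ_root_const) simp
    moreover have "spectral_norm p (a+b) \<le> root n (Ca*Cb) * (M+d)" if "n \<ge> 1" for n
    proof -
      have "spectral_norm p (a+b) \<le> root n (p ((a+b)^n))" using spec_props(2)[OF sn that] .
      also have "\<dots> \<le> root n ((Ca*Cb) * (M + d)^n)" using bnd that by simp
      also have "\<dots> = root n (Ca*Cb) * (M+d)" using that M0 d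
        by (simp add: real_root_mult real_root_power_cancel)
      finally show ?thesis .
    qed
    ultimately show ?thesis
      by (intro LIMSEQ_le_const[of "\<lambda>n. root n (Ca*Cb) * (M+d)"]) auto
  qed
  then have "spectral_norm p (a+b) \<le> M" by (rule field_le_epsilon)
  then show ?thesis unfolding M_def .
qed

lemma root_mult_pow_eq:
  assumes "k \<ge> 1" "0 \<le> x"
  shows "root n x = (root (k*n) x)^k"
proof (cases "n = 0")
  case True then show ?thesis using assms by simp
next
  case False
  have "root (k*n) x = root (n*k) x" by (simp add: mult.commute)
  also have "\<dots> = root n (root k x)" by (rule real_root_mult_exp)
  finally have "(root (k*n) x)^k = root n (root k x) ^ k" by simp
  also have "\<dots> = root n (root k x ^ k)" using False by (simp add: real_root_power)
  also have "\<dots> = root n x" using assms by simp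
  finally show ?thesis by simp
qed

lemma spec_pow:
  assumes sn: "snorm p" and p1: "0 < p 1"
  shows "spectral_norm p (a^k) = spectral_norm p a ^ k"
proof (cases "k = 0")
  case True then show ?thesis using spec_one[OF sn p1] by simp
next
  case False
  then have k: "k \<ge> 1" by simp
  have sm: "strict_mono (\<lambda>n. k*n)" using k by (auto intro: strict_monoI)
  have "(\<lambda>n. root (k*n) (p (a^(k*n)))) \<longlonglongrightarrow> spectral_norm p a"
    using LIMSEQ_subseq_LIMSEQ[OF spec_props(1)[OF sn, of a] sm] by (simp add: o_def)
  then have "(\<lambda>n. (root (k*n) (p (a^(k*n))))^k) \<longlonglongrightarrow> spectral_norm p a ^ k"
    by (intro tendsto_intros)
  moreover have "(root (k*n) (p (a^(k*n))))^k = root n (p ((a^k)^n))" for n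
    using root_mult_pow_eq[OF k snormD(1)[OF sn], of n "a^(k*n)"] by (simp add: power_mult)
  ultimately have "(\<lambda>n. root n (p ((a^k)^n))) \<longlonglongrightarrow> spectral_norm p a ^ k" by simp
  then show ?thesis using spec_props(1)[OF sn, of "a^k"] LIMSEQ_unique by blast
qed

lemma knorm_snorm: "k_alg_norm v emb nA \<Longrightarrow> snorm nA"
  unfolding k_alg_norm_def snorm_def by auto

lemma knorm_one_pos: "k_alg_norm v emb nA \<Longrightarrow> 0 < nA 1"
  unfolding k_alg_norm_def by (metis less_eq_real_def one_neq_zero)

lemma v_one: "nonarch_abs v \<Longrightarrow> v 1 = 1"
  unfolding nonarch_abs_def
  by (metis mult.right_neutral mult_cancel_left one_neq_zero)

lemma v_pow: "nonarch_abs v \<Longrightarrow> v (x^n) = v x ^ n"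
  by (induction n) (auto simp: v_one, simp add: nonarch_abs_def)

lemma v_mult: "nonarch_abs v \<Longrightarrow> v (x*y) = v x * v y"
  unfolding nonarch_abs_def by auto

lemma v_nonneg: "nonarch_abs v \<Longrightarrow> 0 \<le> v x"
  unfolding nonarch_abs_def by auto

lemma v_zero_iff: "nonarch_abs v \<Longrightarrow> v x = 0 \<longleftrightarrow> x = 0"
  unfolding nonarch_abs_def by auto

lemma v_inverse: assumes "nonarch_abs v" shows "v (inverse x) = inverse (v x)"
proof (cases "x = 0")
  case True then show ?thesis using v_zero_iff[OF assms, of 0] by simp
next
  case False
  have "v x * v (inverse x) = 1" using v_mult[OF assms, of x "inverse x"] v_one[OF assms] False by simp
  then have "inverse (v x) = v (inverse x)" by (rule inverse_unique)
  then show ?thesis by simp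
qed

lemma emb_props:
  assumes "k_alg_norm v emb nA"
  shows "emb 1 = 1" "emb (c*d) = emb c * emb d" "emb (c+d) = emb c + emb d" "emb 0 = 0"
    "emb (c^n) = emb c ^ n"
proof -
  have e1: "emb 1 = 1" and em: "\<And>c d. emb (c*d) = emb c * emb d" and ea: "\<And>c d. emb (c+d) = emb c + emb d"
    using assms unfolding k_alg_norm_def by auto
  then show "emb 1 = 1" "emb (c*d) = emb c * emb d" "emb (c+d) = emb c + emb d" by auto
  show "emb 0 = 0" using ea[of 0 0] by simp
  show "emb (c^n) = emb c ^ n" by (induction n) (simp_all add: e1 em)
qed

lemma nA_emb: "k_alg_norm v emb nA \<Longrightarrow> nA (emb c * a) = v c * nA a"
  unfolding k_alg_norm_def by auto

lemma spec_homog: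
  assumes kn: "k_alg_norm v emb nA" and na: "nonarch_abs v"
  shows "spectral_norm nA (emb c * f) = v c * spectral_norm nA f"
proof -
  have sn: "snorm nA" by (rule knorm_snorm[OF kn])
  have "root n (nA ((emb c * f)^n)) = v c * root n (nA (f^n))" if "n \<ge> 1" for n
  proof -
    have "nA ((emb c * f)^n) = nA (emb (c^n) * f^n)"
      by (simp add: power_mult_distrib emb_props[OF kn])
    also have "\<dots> = v c ^ n * nA (f^n)" by (simp add: nA_emb[OF kn] v_pow[OF na])
    finally show ?thesis using that v_nonneg[OF na, of c]
      by (simp add: real_root_mult real_root_power_cancel)
  qed
  then have ev: "\<forall>\<^sub>F n in sequentially. v c * root n (nA (f^n)) = root n (nA ((emb c * f)^n))"
    by (auto simp: eventually_sequentially intro!: exI[of _ 1])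
  have t: "(\<lambda>n. v c * root n (nA (f^n))) \<longlonglongrightarrow> v c * spectral_norm nA f"
    by (intro tendsto_intros spec_props[OF sn])
  have "(\<lambda>n. root n (nA ((emb c * f)^n))) \<longlonglongrightarrow> v c * spectral_norm nA f"
    by (rule Lim_transform_eventually[OF t ev])
  then show ?thesis using spec_props(1)[OF sn, of "emb c * f"] LIMSEQ_unique by blast
qed

lemma berkD:
  assumes "y \<in> berk_spectrum nA"
  shows "0 \<le> y a" "y 0 = 0" "y 1 = 1" "y (a+b) \<le> y a + y b" "y (a*b) = y a * y b"
    "\<exists>C. \<forall>a. y a \<le> C * nA a"
  using assms unfolding berk_spectrum_def by auto

lemma berk_pow: "y \<in> berk_spectrum nA \<Longrightarrow> y (a^n) = y a ^ n"
  by (induction n) (simp_all add: berkD)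

lemma berk_le_spec:
  assumes kn: "k_alg_norm v emb nA" and y: "y \<in> berk_spectrum nA"
  shows "y a \<le> spectral_norm nA a"
proof -
  have sn: "snorm nA" by (rule knorm_snorm[OF kn])
  obtain C where C: "\<And>a. y a \<le> C * nA a" using berkD(6)[OF y] by blast
  have "1 \<le> C * nA 1" using C[of 1] berkD(3)[OF y] by simp
  have C0: "0 < C"
  proof (rule ccontr)
    assume "\<not> 0 < C"
    then have "C * nA 1 \<le> 0" using knorm_one_pos[OF kn] by (simp add: mult_nonpos_nonneg)
    then show False using \<open>1 \<le> C * nA 1\<close> by simp
  qed
  have "(\<lambda>n. root n C * root n (nA (a^n))) \<longlonglongrightarrow> 1 * spectral_norm nA a"
    by (intro tendsto_intros LIMSEQ_root_const C0 spec_props[OF sn])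
  moreover have "y a \<le> root n C * root n (nA (a^n))" if "n \<ge> 1" for n
  proof -
    have "y a ^ n \<le> C * nA (a^n)" using C[of "a^n"] berk_pow[OF y] by simp
    then have "root n (y a ^ n) \<le> root n (C * nA (a^n))" using that by simp
    then show ?thesis using that berkD(1)[OF y] by (simp add: real_root_power_cancel real_root_mult)
  qed
  ultimately show ?thesis by (intro LIMSEQ_le_const) auto
qed

lemma berk_le_norm:
  "k_alg_norm v emb nA \<Longrightarrow> y \<in> berk_spectrum nA \<Longrightarrow> y a \<le> nA a"
  using berk_le_spec spec_le knorm_snorm order_trans by metis

lemma subadd_sum:
  fixes y :: "'a::comm_ring_1 \<Rightarrow> real"
  assumes "\<And>a b. y (a+b) \<le> y a + y b" "y 0 = 0"
  shows "y (sum f F) \<le> (\<Sum>k\<in>F. y (f k))"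
proof (cases "finite F")
  case True then show ?thesis
  proof (induction F rule: finite_induct)
    case empty then show ?case using assms by simp
  next
    case (insert x F)
    then show ?case using assms(1)[of "f x" "sum f F"] by simp
  qed
next
  case False then show ?thesis using assms by simp
qed

lemma berk_nonarch:
  assumes kn: "k_alg_norm v emb nA" and y: "y \<in> berk_spectrum nA"
  shows "y (a+b) \<le> max (y a) (y b)"
proof -
  have sn: "snorm nA" by (rule knorm_snorm[OF kn])
  define M where "M = max (y a) (y b)"
  have M0: "0 \<le> M" unfolding M_def using berkD(1)[OF y] by (simp add: le_max_iff_disj)
  define K where "K = 2 * nA 1"
  have K0: "0 < K" unfolding K_def using knorm_one_pos[OF kn] by simp
  have bnd: "y (a+b) ^ n \<le> K * real n * M^n" if n: "n \<ge> 1" for n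
  proof -
    have "y (a+b) ^ n = y ((a+b)^n)" by (simp add: berk_pow[OF y])
    also have "\<dots> = y (\<Sum>k\<le>n. of_nat (n choose k) * a^k * b^(n-k))" by (simp add: binomial_ring)
    also have "\<dots> \<le> (\<Sum>k\<le>n. y (of_nat (n choose k) * a^k * b^(n-k)))"
      by (rule subadd_sum) (use berkD[OF y] in auto)
    also have "\<dots> \<le> (\<Sum>k\<le>n. nA 1 * M^n)"
    proof (rule sum_mono)
      fix k assume k: "k \<in> {..n}"
      have "y (of_nat (n choose k) * a^k * b^(n-k)) = y (of_nat (n choose k)) * (y a ^ k * y b ^ (n-k))"
        by (simp add: berkD(5)[OF y] berk_pow[OF y])
      also have "\<dots> \<le> nA 1 * (M^k * M^(n-k))"
      proof (rule mult_mono)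
        have "y (of_nat (n choose k)) \<le> nA (of_nat (n choose k) * 1)"
          using berk_le_norm[OF kn y] by simp
        also have "\<dots> \<le> nA 1" by (rule snorm_of_nat_mult[OF sn])
        finally show "y (of_nat (n choose k)) \<le> nA 1" .
        show "y a ^ k * y b ^ (n - k) \<le> M ^ k * M ^ (n - k)"
          using berkD(1)[OF y] unfolding M_def
          by (intro mult_mono power_mono zero_le_power) (auto simp: le_max_iff_disj)
      qed (use berkD(1)[OF y] M0 knorm_one_pos[OF kn] in \<open>auto simp: M_def le_max_iff_disj\<close>)
      also have "\<dots> = nA 1 * M^n" using k by (simp add: power_add[symmetric])
      finally show "y (of_nat (n choose k) * a^k * b^(n-k)) \<le> nA 1 * M^n" .
    qed
    also have "\<dots> = real (n+1) * nA 1 * M^n" by simp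
    also have "\<dots> \<le> K * real n * M^n"
    proof -
      have "real (n+1) \<le> 2 * real n" using n by simp
      then show ?thesis unfolding K_def using M0 knorm_one_pos[OF kn]
        by (intro mult_right_mono) (auto simp: field_simps)
    qed
    finally show ?thesis .
  qed
  have "(\<lambda>n. root n K * root n (real n) * M) \<longlonglongrightarrow> 1 * 1 * M"
    by (intro tendsto_intros LIMSEQ_root_const K0 LIMSEQ_root)
  moreover have "y (a+b) \<le> root n K * root n (real n) * M" if n: "n \<ge> 1" for n
  proof -
    have "root n (y (a+b) ^ n) \<le> root n (K * real n * M^n)" using bnd[OF n] n by simp
    then show ?thesis using n berkD(1)[OF y] M0
      by (simp add: real_root_power_cancel real_root_mult)
  qed
  ultimately show ?thesis unfolding M_def by (intro LIMSEQ_le_const) auto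
qed

lemma berk_emb:
  assumes kn: "k_alg_norm v emb nA" and na: "nonarch_abs v" and y: "y \<in> berk_spectrum nA"
  shows "y (emb c) = v c"
proof -
  have sn: "snorm nA" by (rule knorm_snorm[OF kn])
  have up: "y (emb d) \<le> v d" for d
  proof -
    have "y (emb d) = y (emb d * 1)" by simp
    also have "\<dots> \<le> spectral_norm nA (emb d * 1)" by (rule berk_le_spec[OF kn y])
    also have "\<dots> = v d" using spec_homog[OF kn na, of d 1] spec_one[OF sn knorm_one_pos[OF kn]] by simp
    finally show ?thesis .
  qed
  show ?thesis
  proof (cases "c = 0")
    case True then show ?thesis using emb_props(4)[OF kn] berkD(2)[OF y] v_zero_iff[OF na] by simp
  next
    case False
    have "1 = y (emb (c * inverse c))" using False by (simp add: emb_props(1)[OF kn] berkD(3)[OF y])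
    also have "\<dots> = y (emb c) * y (emb (inverse c))" by (simp add: emb_props(2)[OF kn] berkD(5)[OF y])
    also have "\<dots> \<le> y (emb c) * inverse (v c)"
      using up[of "inverse c"] v_inverse[OF na] berkD(1)[OF y] by (simp add: mult_left_mono)
    finally have "1 \<le> y (emb c) * inverse (v c)" .
    moreover have "0 < v c" using False v_zero_iff[OF na] v_nonneg[OF na] by (metis less_eq_real_def)
    ultimately have "v c \<le> y (emb c)" by (simp add: field_simps)
    then show ?thesis using up[of c] by simp
  qed
qed

definition Sp :: "('a::comm_ring_1 \<Rightarrow> real) \<Rightarrow> ('a \<Rightarrow> real) set" where
  "Sp nA = {p. snorm p \<and> (\<forall>a. p a \<le> nA a) \<and> (\<forall>a n. p (a^n) = p a ^ n)}"

lemma SpD: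
  assumes "p \<in> Sp nA"
  shows "snorm p" "p a \<le> nA a" "p (a^n) = p a ^ n" "0 \<le> p a" "p 0 = 0"
    "p (a+b) \<le> max (p a) (p b)" "p (a*b) \<le> p a * p b" "p 1 = 1"
  using assms snormD[of p] unfolding Sp_def apply auto
  by (metis power_0)

lemma spec_in_Sp:
  assumes sn: "snorm nA" and p1: "0 < nA 1"
  shows "spectral_norm nA \<in> Sp nA"
  unfolding Sp_def snorm_def
  using spec_nonneg[OF sn] spec_zero[OF sn] spec_nonarch[OF sn] spec_mult[OF sn] spec_le[OF sn]
    spec_pow[OF sn p1] by auto

lemma chain_inf_Sp:
  fixes C :: "('a::comm_ring_1 \<Rightarrow> real) set"
  assumes CS: "C \<subseteq> Sp nA" and Cne: "C \<noteq> {}"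
    and comp: "\<And>p q. p \<in> C \<Longrightarrow> q \<in> C \<Longrightarrow> p \<le> q \<or> q \<le> p"
  shows "(\<lambda>a. INF p\<in>C. p a) \<in> Sp nA"
proof -
  define q where "q a = (INF p\<in>C. p a)" for a
  have bdd: "bdd_below ((\<lambda>p. p a) ` C)" for a
    using CS SpD(4) by (intro bdd_belowI[of _ 0]) blast
  have qle: "q a \<le> p a" if "p \<in> C" for p a
    unfolding q_def using that bdd by (intro cINF_lower) auto
  have qge: "z \<le> q a" if "\<And>p. p \<in> C \<Longrightarrow> z \<le> p a" for z a
    unfolding q_def using that Cne by (intro cINF_greatest) auto
  have qless: "\<exists>p\<in>C. p a < z" if "q a < z" for a z
    using that cINF_less_iff[OF Cne bdd] unfolding q_def by auto
  have two: "\<exists>p\<in>C. p a < z1 \<and> p b < z2" if h1: "q a < z1" and h2: "q b < z2" for a b z1 z2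
  proof -
    obtain p1 where p1: "p1 \<in> C" "p1 a < z1" using qless[OF h1] by blast
    obtain p2 where p2: "p2 \<in> C" "p2 b < z2" using qless[OF h2] by blast
    show ?thesis
    proof (cases "p1 \<le> p2")
      case True then show ?thesis using p1 p2 by (auto intro: exI[of _ p1] simp: le_fun_def intro: le_less_trans)
    next
      case False then have "p2 \<le> p1" using comp p1 p2 by blast
      then show ?thesis using p1 p2 by (auto simp: le_fun_def intro: le_less_trans)
    qed
  qed
  have nn: "0 \<le> q a" for a using qge SpD(4) CS by blast
  have q0: "q 0 = 0" using qle[of _ 0] nn[of 0] Cne CS SpD(5) by (metis antisym ex_in_conv subsetD)
  have na: "q (a+b) \<le> max (q a) (q b)" for a b
  proof (rule ccontr)
    assume "\<not> ?thesis"
    then have "q a < q (a+b)" "q b < q (a+b)" by auto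
    then obtain p where p: "p \<in> C" "p a < q (a+b)" "p b < q (a+b)" using two by blast
    then have "p (a+b) < q (a+b)" using SpD(6)[of p nA a b] CS by auto
    then show False using qle[OF p(1)] by (simp add: not_le[symmetric])
  qed
  have sm: "q (a*b) \<le> q a * q b" for a b
  proof (rule ccontr)
    assume "\<not> ?thesis"
    then have lt: "q a * q b < q (a*b)" by simp
    have "(\<lambda>n. (q a + inverse (real (Suc n))) * (q b + inverse (real (Suc n)))) \<longlonglongrightarrow> (q a + 0) * (q b + 0)"
      by (intro tendsto_intros LIMSEQ_inverse_real_of_nat)
    then have "\<forall>\<^sub>F n in sequentially. (q a + inverse (real (Suc n))) * (q b + inverse (real (Suc n))) < q (a*b)"
      using lt by (intro order_tendstoD) auto
    then obtain n where n: "(q a + inverse (real (Suc n))) * (q b + inverse (real (Suc n))) < q (a*b)"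
      by (auto simp: eventually_sequentially)
    have "q a < q a + inverse (real (Suc n))" "q b < q b + inverse (real (Suc n))" by auto
    then obtain p where p: "p \<in> C" "p a < q a + inverse (real (Suc n))" "p b < q b + inverse (real (Suc n))"
      using two by blast
    have "p (a*b) \<le> p a * p b" using SpD(7) p(1) CS by blast
    also have "\<dots> \<le> (q a + inverse (real (Suc n))) * (q b + inverse (real (Suc n)))"
      using p SpD(4)[of p nA] CS nn[of a] by (intro mult_mono) (auto simp: add_nonneg_nonneg)
    finally have "p (a*b) < q (a*b)" using n by simp
    then show False using qle[OF p(1)] by (simp add: not_le[symmetric])
  qed
  have le: "q a \<le> nA a" for a
    using Cne CS qle SpD(2) by (meson ex_in_conv order_trans subsetD)
  have pw: "q (a^n) = q a ^ n" for a n
  proof (cases "n = 0")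
    case True
    obtain p0 where p0: "p0 \<in> C" using Cne by blast
    have "q 1 \<le> 1" using qle[OF p0, of 1] SpD(8)[of p0 nA] p0 CS by auto
    moreover have "1 \<le> q 1"
    proof (rule qge)
      fix p assume "p \<in> C"
      then have "p \<in> Sp nA" using CS by blast
      from SpD(8)[OF this] show "1 \<le> p 1" by simp
    qed
    ultimately show ?thesis using True by simp
  next
    case False
    have ge: "q a ^ n \<le> q (a^n)"
    proof (rule qge)
      fix p assume "p \<in> C"
      then have pS: "p \<in> Sp nA" using CS by blast
      have "q a ^ n \<le> p a ^ n" using qle[OF \<open>p \<in> C\<close>, of a] nn[of a] by (intro power_mono)
      then show "q a ^ n \<le> p (a^n)" using SpD(3)[OF pS, of a n] by simp
    qed
    have "\<not> q a ^ n < q (a^n)"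
    proof
      assume lt: "q a ^ n < q (a^n)"
      define s where "s = root n (q (a^n))"
      have "q a = root n (q a ^ n)" using False nn by (simp add: real_root_power_cancel)
      also have "\<dots> < s" unfolding s_def using lt False by simp
      finally have "q a < s" .
      then obtain p where p: "p \<in> C" "p a < s" using qless by blast
      have "p a ^ n < s ^ n" using p False SpD(4)[of p nA a] CS by (intro power_strict_mono) auto
      also have "\<dots> = q (a^n)" unfolding s_def using False nn by simp
      also have "\<dots> \<le> p (a^n)" using qle[OF p(1)] .
      also have "\<dots> = p a ^ n" using SpD(3) p CS by blast
      finally show False by simp
    qed
    then show ?thesis using ge by simp
  qed
  show ?thesis
    unfolding Sp_def snorm_def q_def[symmetric] using nn q0 na sm le pw by auto
qed

lemma Sp_minimal_exists:
  assumes sn: "snorm nA" and p1: "0 < nA 1"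
  shows "\<exists>m\<in>Sp nA. \<forall>p\<in>Sp nA. p \<le> m \<longrightarrow> p = m"
proof -
  define r where "r = {(p, q). p \<in> Sp nA \<and> q \<in> Sp nA \<and> q \<le> p}"
  have F: "Field r = Sp nA" unfolding r_def Field_def by auto
  have po: "Partial_order r" unfolding F
    unfolding partial_order_on_def preorder_on_def refl_on_def trans_def antisym_def
    unfolding r_def by auto
  have "\<exists>u\<in>Field r. \<forall>a\<in>C. (a, u) \<in> r" if C: "C \<in> Chains r" for C
  proof (cases "C = {}")
    case True then show ?thesis using spec_in_Sp[OF sn p1] F by auto
  next
    case False
    have CS: "C \<subseteq> Sp nA" using C unfolding Chains_def r_def by blast
    have comp: "p \<le> q \<or> q \<le> p" if "p \<in> C" "q \<in> C" for p q
      using C that unfolding Chains_def r_def by blast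
    define u where "u = (\<lambda>a. INF p\<in>C. p a)"
    have uS: "u \<in> Sp nA" unfolding u_def by (rule chain_inf_Sp[OF CS False comp])
    have "u \<le> p" if "p \<in> C" for p
    proof -
      have "bdd_below ((\<lambda>p. p a) ` C)" for a
        using CS SpD(4) by (intro bdd_belowI[of _ 0]) blast
      then show ?thesis unfolding u_def le_fun_def using that by (auto intro: cINF_lower)
    qed
    then show ?thesis using uS CS F unfolding r_def by auto
  qed
  from Zorns_po_lemma[OF po this] obtain m where "m \<in> Sp nA" "\<forall>a\<in>Sp nA. (m, a) \<in> r \<longrightarrow> a = m"
    unfolding F by blast
  then show ?thesis unfolding r_def by auto
qed

lemma min_mult:
  assumes mS: "m \<in> Sp nA" and mmin: "\<forall>p\<in>Sp nA. p \<le> m \<longrightarrow> p = m"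
  shows "m (a*b) = m a * m b"
proof (cases "m a = 0")
  case True
  then show ?thesis using SpD(7)[OF mS, of a b] SpD(4)[OF mS, of "a*b"] by simp
next
  case False
  define r where "r = m a"
  have r0: "0 < r" unfolding r_def using False SpD(4)[OF mS, of a] by simp
  define t where "t c n = m (a^n * c) / r^n" for c n
  have t0: "0 \<le> t c n" for c n unfolding t_def using SpD(4)[OF mS] r0 by simp
  have dec: "decseq (t c)" for c
  proof (rule decseq_SucI)
    fix n
    have "m (a^Suc n * c) = m (a * (a^n * c))" by (simp add: mult.assoc)
    also have "\<dots> \<le> r * m (a^n * c)" unfolding r_def by (rule SpD(7)[OF mS])
    finally show "t c (Suc n) \<le> t c n" unfolding t_def using r0 by (simp add: field_simps)
  qed
  define P where "P c = (INF n. t c n)" for c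
  have tl: "t c \<longlonglongrightarrow> P c" for c unfolding P_def
    by (rule LIMSEQ_decseq_INF[OF _ dec]) (use t0 in \<open>auto intro: bdd_belowI[of _ 0]\<close>)
  have Ple: "P c \<le> t c n" for c n
    using LIMSEQ_le_const2[OF tl[of c]] dec[of c] by (metis decseq_def le_eq_less_or_eq order.refl) 
  have P_m: "P c \<le> m c" for c using Ple[of c 0] unfolding t_def by simp
  have Pnn: "0 \<le> P c" for c using tl[of c] t0 by (intro LIMSEQ_le_const) auto
  have P0: "P 0 = 0" using Pnn[of 0] Ple[of 0 0] unfolding t_def by (simp add: SpD(5)[OF mS])
  have Pna: "P (b+c) \<le> max (P b) (P c)" for b c
  proof -
    have "(\<lambda>n. max (t b n) (t c n)) \<longlonglongrightarrow> max (P b) (P c)" by (intro tendsto_max tl)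
    moreover have "P (b+c) \<le> max (t b n) (t c n)" for n
    proof -
      have "m (a^n * (b+c)) \<le> max (m (a^n*b)) (m (a^n*c))"
        using SpD(6)[OF mS] by (simp add: distrib_left)
      then have "t (b+c) n \<le> max (m (a^n*b)) (m (a^n*c)) / r^n" unfolding t_def using r0
        by (simp add: divide_right_mono)
      also have "\<dots> = max (t b n) (t c n)" unfolding t_def using r0
        by (simp add: max_divide_distrib_right)
      finally have "t (b+c) n \<le> max (t b n) (t c n)" .
      then show ?thesis using Ple[of "b+c" n] by simp
    qed
    ultimately show ?thesis by (intro LIMSEQ_le_const) auto
  qed
  have Psm: "P (b*c) \<le> P b * P c" for b c
  proof -
    have "(\<lambda>n. t b n * t c n) \<longlonglongrightarrow> P b * P c" by (intro tendsto_mult tl)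
    moreover have "P (b*c) \<le> t b n * t c n" for n
    proof -
      have "a^(2*n) = a^n * a^n" by (metis mult_2 power_add)
      then have "a^(2*n) * (b*c) = (a^n * b) * (a^n * c)"
        by (simp add: algebra_simps)
      then have "m (a^(2*n) * (b*c)) = m ((a^n * b) * (a^n * c))" by simp
      also have "\<dots> \<le> m (a^n*b) * m (a^n*c)" by (rule SpD(7)[OF mS])
      finally have "t (b*c) (2*n) \<le> t b n * t c n" unfolding t_def using r0
        by (simp add: power_add mult_2 divide_right_mono)
      then show ?thesis using Ple[of "b*c" "2*n"] by simp
    qed
    ultimately show ?thesis by (intro LIMSEQ_le_const) auto
  qed
  have Ppow: "P (b^k) = P b ^ k" for b k
  proof (cases "k = 0")
    case True
    have "t 1 n = 1" for n unfolding t_def r_def using SpD(3)[OF mS, of a n] r0 r_def by simp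
    then have "t 1 = (\<lambda>n. 1)" by auto
    then have "(\<lambda>n. 1::real) \<longlonglongrightarrow> P 1" using tl[of 1] by simp
    then have "P 1 = 1" using LIMSEQ_unique[OF _ tendsto_const] by metis
    then show ?thesis using True by simp
  next
    case False
    have sm: "strict_mono (\<lambda>n. k*n)" using False by (auto intro: strict_monoI)
    have "(\<lambda>n. t (b^k) (k*n)) \<longlonglongrightarrow> P (b^k)"
      using LIMSEQ_subseq_LIMSEQ[OF tl sm] by (simp add: o_def)
    moreover have "t (b^k) (k*n) = t b n ^ k" for n
    proof -
      have "a^(k*n) = (a^n)^k" by (metis mult.commute power_mult)
      then have "m (a^(k*n) * b^k) = m ((a^n*b)^k)" by (simp add: power_mult_distrib)
      also have "\<dots> = m (a^n*b) ^ k" by (rule SpD(3)[OF mS])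
      finally have e: "m (a^(k*n) * b^k) = m (a^n*b) ^ k" .
      have "r^(k*n) = (r^n)^k" by (metis mult.commute power_mult)
      then show ?thesis unfolding t_def using e by (simp add: power_divide)
    qed
    ultimately have "(\<lambda>n. t b n ^ k) \<longlonglongrightarrow> P (b^k)" by simp
    moreover have "(\<lambda>n. t b n ^ k) \<longlonglongrightarrow> P b ^ k" by (intro tendsto_intros tl)
    ultimately show ?thesis using LIMSEQ_unique by blast
  qed
  have PS: "P \<in> Sp nA"
    unfolding Sp_def snorm_def using Pnn P0 Pna Psm Ppow P_m SpD(2)[OF mS] order_trans by blast
  have "P \<le> m" using P_m by (simp add: le_fun_def)
  then have "P = m" using mmin PS by blast
  then have "m b \<le> t b 1" using Ple[of b 1] by simp
  then have "r * m b \<le> m (a*b)" unfolding t_def using r0 by (simp add: field_simps)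
  then show ?thesis using SpD(7)[OF mS, of a b] r_def by simp
qed

lemma berk_nonempty:
  assumes kn: "k_alg_norm v emb nA"
  shows "berk_spectrum nA \<noteq> {}"
proof -
  have sn: "snorm nA" by (rule knorm_snorm[OF kn])
  obtain m where mS: "m \<in> Sp nA" and mmin: "\<forall>p\<in>Sp nA. p \<le> m \<longrightarrow> p = m"
    using Sp_minimal_exists[OF sn knorm_one_pos[OF kn]] by blast
  have "m \<in> berk_spectrum nA"
    unfolding berk_spectrum_def
  proof (intro CollectI conjI allI exI[of _ 1])
    fix a b
    show "0 \<le> m a" by (rule SpD(4)[OF mS])
    have "max (m a) (m b) \<le> m a + m b" using SpD(4)[OF mS, of a] SpD(4)[OF mS, of b] by simp
    then show "m (a+b) \<le> m a + m b" using SpD(6)[OF mS, of a b] by linarith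
    show "m (a*b) = m a * m b" by (rule min_mult[OF mS mmin])
    show "m a \<le> 1 * nA a" using SpD(2)[OF mS] by simp
  qed (use SpD(5,8)[OF mS] in auto)
  then show ?thesis by blast
qed

lemma alg_root:
  assumes ac: "alg_closed TYPE('k::field)" and q: "q \<ge> 1"
  shows "\<exists>b::'k. b^q = a"
proof -
  define p where "p = monom (1::'k) q + [:-a:]"
  have "degree p = q" unfolding p_def using q
    by (subst degree_add_eq_left) (auto simp: degree_monom_eq)
  then have "0 < degree p" using q by simp
  then obtain b where "poly p b = 0" using ac unfolding alg_closed_def by blast
  then have "b^q = a" unfolding p_def by (simp add: poly_monom)
  then show ?thesis by blast
qed

lemma value_dense_pos:
  fixes v :: "'k::field \<Rightarrow> real"
  assumes na: "nonarch_abs v" and nt: "nontrivial_abs v" and ac: "alg_closed TYPE('k)"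
    and ab: "0 < \<alpha>" "\<alpha> < \<beta>"
  shows "\<exists>c. c \<noteq> 0 \<and> \<alpha> < v c \<and> v c < \<beta>"
proof -
  obtain x where x: "v x \<noteq> 0" "v x \<noteq> 1" using nt unfolding nontrivial_abs_def by blast
  define a where "a = (if v x > 1 then x else inverse x)"
  define T where "T = v a"
  have T1: "1 < T"
  proof (cases "v x > 1")
    case True then show ?thesis unfolding T_def a_def by simp
  next
    case False
    then have "0 < v x" "v x < 1" using x v_nonneg[OF na, of x] by auto
    then show ?thesis unfolding T_def a_def using False v_inverse[OF na, of x]
      by (simp add: one_less_inverse_iff)
  qed
  have "(\<lambda>q. root q T) \<longlonglongrightarrow> 1" using T1 by (intro LIMSEQ_root_const) simp
  then have "\<forall>\<^sub>F q in sequentially. root q T < \<beta> / \<alpha>" using ab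
    by (intro order_tendstoD) (auto simp: field_simps)
  then obtain N where N: "\<And>q. q \<ge> N \<Longrightarrow> root q T < \<beta> / \<alpha>"
    by (auto simp: eventually_sequentially)
  define q where "q = max N 1"
  have q: "q \<ge> 1" "root q T < \<beta> / \<alpha>" unfolding q_def using N by auto
  obtain b where b: "b^q = a" using alg_root[OF ac q(1)] by blast
  define \<tau> where "\<tau> = v b"
  have "\<tau>^q = T" unfolding \<tau>_def T_def using b v_pow[OF na] by metis
  then have \<tau>eq: "\<tau> = root q T" unfolding \<tau>_def using q v_nonneg[OF na, of b]
    by (metis real_root_power_cancel le_numeral_extra(2) not_one_le_zero order_less_le_trans zero_less_one
        not_less_iff_gr_or_eq gr0I)
  have \<tau>1: "1 < \<tau>" using \<tau>eq q T1 by simp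
  have \<tau>lt: "\<tau> * \<alpha> < \<beta>" using q(2) \<tau>eq ab by (simp add: field_simps)
  define j where "j = \<lfloor>log \<tau> \<alpha>\<rfloor> + 1"
  have lg: "\<tau> powr (log \<tau> \<alpha>) = \<alpha>" using \<tau>1 ab by simp
  have j1: "\<alpha> < \<tau> powr (real_of_int j)"
  proof -
    have "log \<tau> \<alpha> < real_of_int j" unfolding j_def by linarith
    then have "\<tau> powr (log \<tau> \<alpha>) < \<tau> powr (real_of_int j)" using \<tau>1 by simp
    then show ?thesis using lg by simp
  qed
  have j2: "\<tau> powr (real_of_int j) < \<beta>"
  proof -
    have "real_of_int j - 1 \<le> log \<tau> \<alpha>" unfolding j_def by linarith
    then have "\<tau> powr (real_of_int j - 1) \<le> \<alpha>" using \<tau>1 lg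
      by (metis powr_le_cancel_iff)
    moreover have "\<tau> powr (real_of_int j) = \<tau> * \<tau> powr (real_of_int j - 1)"
    proof -
      have "\<tau> powr (real_of_int j) = \<tau> powr (1 + (real_of_int j - 1))" by simp
      also have "\<dots> = \<tau> powr 1 * \<tau> powr (real_of_int j - 1)" by (rule powr_add)
      also have "\<dots> = \<tau> * \<tau> powr (real_of_int j - 1)" using \<tau>1 by simp
      finally show ?thesis .
    qed
    ultimately have "\<tau> powr (real_of_int j) \<le> \<tau> * \<alpha>" using \<tau>1 by simp
    then show ?thesis using \<tau>lt by simp
  qed
  define c where "c = (if j \<ge> 0 then b ^ nat j else inverse (b ^ nat (-j)))"
  have b0: "b \<noteq> 0" using \<tau>1 v_zero_iff[OF na, of b] \<tau>_def by auto
  have c0: "c \<noteq> 0" unfolding c_def using b0 by simp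
  have "v c = (if j \<ge> 0 then \<tau> ^ nat j else inverse (\<tau> ^ nat (-j)))"
    unfolding c_def \<tau>_def by (simp add: v_pow[OF na] v_inverse[OF na])
  also have "\<dots> = \<tau> powr (real_of_int j)" using \<tau>1 by (simp add: powr_real_of_int)
  finally show ?thesis using c0 j1 j2 by auto
qed

lemma value_dense:
  fixes v :: "'k::field \<Rightarrow> real"
  assumes na: "nonarch_abs v" and nt: "nontrivial_abs v" and ac: "alg_closed TYPE('k)"
    and ab: "0 \<le> \<alpha>" "\<alpha> < \<beta>"
  shows "\<exists>c. c \<noteq> 0 \<and> \<alpha> < v c \<and> v c < \<beta>"
proof (cases "\<alpha> = 0")
  case True
  then obtain c where "c \<noteq> 0" "\<beta>/2 < v c" "v c < \<beta>" using value_dense_pos[OF na nt ac, of "\<beta>/2" \<beta>] ab by auto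
  then show ?thesis using True ab by auto
next
  case False then show ?thesis using value_dense_pos[OF na nt ac] ab by auto
qed

lemma topspace_prodR [simp]:
  "topspace (product_topology (\<lambda>_::'a. euclideanreal) UNIV) = UNIV"
  by (simp add: PiE_UNIV_domain)

lemma closedin_prodR:
  assumes "continuous_map (product_topology (\<lambda>_::'a. euclideanreal) UNIV) euclideanreal f" "closed C"
  shows "closedin (product_topology (\<lambda>_::'a. euclideanreal) UNIV) {y. f y \<in> C}"
  using closedin_continuous_map_preimage[OF assms(1), of C] assms(2) by simp

lemma openin_prodR:
  assumes "continuous_map (product_topology (\<lambda>_::'a. euclideanreal) UNIV) euclideanreal f" "open C"
  shows "openin (product_topology (\<lambda>_::'a. euclideanreal) UNIV) {y. f y \<in> C}"
  using openin_continuous_map_preimage[OF assms(1), of C] assms(2) by simp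

lemma proj_cont: "continuous_map (product_topology (\<lambda>_::'a. euclideanreal) UNIV) euclideanreal (\<lambda>y. y a)"
  using continuous_map_product_projection[of a UNIV "\<lambda>_. euclideanreal"] by simp

lemma berk_alt:
  assumes kn: "k_alg_norm v emb nA"
  shows "berk_spectrum nA = {y. (\<forall>a. 0 \<le> y a) \<and> y 0 = 0 \<and> y 1 = 1
      \<and> (\<forall>a b. y (a + b) \<le> y a + y b) \<and> (\<forall>a b. y (a * b) = y a * y b) \<and> (\<forall>a. y a \<le> nA a)}"
  (is "_ = ?R")
proof
  show "berk_spectrum nA \<subseteq> ?R" using berk_le_norm[OF kn] unfolding berk_spectrum_def by blast
  show "?R \<subseteq> berk_spectrum nA" unfolding berk_spectrum_def by (auto intro!: exI[of _ 1])
qed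

lemma berk_compact:
  fixes nA :: "'a::comm_ring_1 \<Rightarrow> real"
  assumes kn: "k_alg_norm v emb nA"
  shows "compactin (berk_top nA) (berk_spectrum nA)"
proof -
  let ?P = "product_topology (\<lambda>_::'a. euclideanreal) UNIV"
  define K where "K = PiE UNIV (\<lambda>a. {0..nA a})"
  have Kc: "compactin ?P K" unfolding K_def by (subst compactin_PiE) auto
  have sub: "berk_spectrum nA \<subseteq> K" unfolding K_def
    using berk_le_norm[OF kn] berkD(1) by (auto simp: PiE_UNIV_domain)
  define A1 where "A1 a = {y::'a\<Rightarrow>real. y a \<in> {0..}}" for a
  define A2 where "A2 = {y::'a\<Rightarrow>real. y 0 \<in> {0}}"
  define A3 where "A3 = {y::'a\<Rightarrow>real. y 1 \<in> {1}}"
  define A4 where "A4 = (\<lambda>(a,b). {y::'a\<Rightarrow>real. y a + y b - y (a+b) \<in> {0..}})"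
  define A5 where "A5 = (\<lambda>(a,b). {y::'a\<Rightarrow>real. y (a*b) - y a * y b \<in> {0}})"
  define A6 where "A6 a = {y::'a\<Rightarrow>real. nA a - y a \<in> {0..}}" for a
  define \<K> where "\<K> = range A1 \<union> {A2, A3} \<union> range A4 \<union> range A5 \<union> range A6"
  have eq: "berk_spectrum nA = \<Inter>\<K>"
  proof (intro Set.set_eqI iffI)
    fix y assume "y \<in> berk_spectrum nA"
    then show "y \<in> \<Inter>\<K>"
      unfolding berk_alt[OF kn] \<K>_def A1_def A2_def A3_def A4_def A5_def A6_def
      by (auto simp: split_def)
  next
    fix y assume y: "y \<in> \<Inter>\<K>"
    have "y \<in> A1 a" "y \<in> A2" "y \<in> A3" "y \<in> A4 (a,b)" "y \<in> A5 (a,b)" "y \<in> A6 a" for a b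
      using y unfolding \<K>_def by auto
    then show "y \<in> berk_spectrum nA"
      unfolding berk_alt[OF kn] A1_def A2_def A3_def A4_def A5_def A6_def by auto
  qed
  have c1: "closedin ?P (A1 a)" for a unfolding A1_def
    by (intro closedin_prodR proj_cont) auto
  have c2: "closedin ?P A2" unfolding A2_def
    by (intro closedin_prodR proj_cont) auto
  have c3: "closedin ?P A3" unfolding A3_def
    by (intro closedin_prodR proj_cont) auto
  have c4: "closedin ?P (A4 ab)" for ab unfolding A4_def
    by (cases ab, simp only: prod.case, intro closedin_prodR continuous_map_add continuous_map_diff proj_cont) auto
  have c5: "closedin ?P (A5 ab)" for ab unfolding A5_def
    by (cases ab, simp only: prod.case, intro closedin_prodR continuous_map_real_mult continuous_map_diff proj_cont) auto
  have c6: "closedin ?P (A6 a)" for a unfolding A6_def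
    by (intro closedin_prodR continuous_map_diff proj_cont) auto
  have "closedin ?P S" if "S \<in> \<K>" for S
    using that c1 c2 c3 c4 c5 c6 unfolding \<K>_def by blast
  then have "closedin ?P (berk_spectrum nA)" unfolding eq by (intro closedin_Inter) (auto simp: \<K>_def)
  then have "compactin ?P (berk_spectrum nA)" using closed_compactin[OF Kc sub] by blast
  then show ?thesis unfolding berk_top_def by (simp add: compactin_subtopology)
qed

lemma berk_nbhd:
  fixes nA :: "'a::comm_ring_1 \<Rightarrow> real"
  assumes "openin (berk_top nA) U" "x \<in> U"
  shows "\<exists>F \<delta>. finite F \<and> 0 < \<delta> \<and> {y \<in> berk_spectrum nA. \<forall>a\<in>F. \<bar>y a - x a\<bar> < \<delta>} \<subseteq> U"
proof -
  let ?P = "product_topology (\<lambda>_::'a. euclideanreal) UNIV"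
  obtain T where T: "openin ?P T" "U = T \<inter> berk_spectrum nA"
    using assms(1) unfolding berk_top_def openin_subtopology by blast
  then have "x \<in> T" using assms(2) by blast
  then obtain W where W: "finite {i. W i \<noteq> UNIV}" "\<And>i. open (W i)" "x \<in> PiE UNIV W" "PiE UNIV W \<subseteq> T"
    using T(1) unfolding openin_product_topology_alt by auto
  define F where "F = {i. W i \<noteq> UNIV}"
  have "\<exists>d>0. ball (x i) d \<subseteq> W i" for i
    using W(2)[of i] W(3) open_contains_ball by (auto simp: PiE_iff)
  then obtain d where d: "\<And>i. d i > 0" "\<And>i. ball (x i) (d i) \<subseteq> W i" by metis
  define \<delta> where "\<delta> = Min (insert 1 (d ` F))"
  have fin: "finite F" using W(1) F_def by simp
  have \<delta>0: "0 < \<delta>" unfolding \<delta>_def using fin d(1) by auto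
  have \<delta>le: "\<delta> \<le> d i" if "i \<in> F" for i unfolding \<delta>_def using fin that by auto
  have "{y \<in> berk_spectrum nA. \<forall>a\<in>F. \<bar>y a - x a\<bar> < \<delta>} \<subseteq> U"
  proof
    fix y assume y: "y \<in> {y \<in> berk_spectrum nA. \<forall>a\<in>F. \<bar>y a - x a\<bar> < \<delta>}"
    have "y i \<in> W i" for i
    proof (cases "i \<in> F")
      case True
      then have "\<bar>y i - x i\<bar> < d i" using y \<delta>le[OF True] by auto
      then have "y i \<in> ball (x i) (d i)" by (simp add: dist_real_def abs_minus_commute)
      then show ?thesis using d(2) by blast
    next
      case False then show ?thesis unfolding F_def by auto
    qed
    then have "y \<in> PiE UNIV W" by (auto simp: PiE_iff)
    then show "y \<in> U" using W(4) T(2) y by blast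
  qed
  then show ?thesis using fin \<delta>0 by blast
qed

lemma berk_open_box:
  fixes nA :: "'a::comm_ring_1 \<Rightarrow> real"
  assumes "finite F"
  shows "openin (berk_top nA) {y \<in> berk_spectrum nA. \<forall>a\<in>F. lo a < y a \<and> y a < hi a}"
proof -
  let ?P = "product_topology (\<lambda>_::'a. euclideanreal) UNIV"
  have "openin ?P {y. \<forall>a\<in>F. lo a < y a \<and> y a < hi a}"
    using assms
  proof (induction F rule: finite_induct)
    case empty then show ?case using openin_topspace[of ?P] by simp
  next
    case (insert a F)
    have "openin ?P {y. y a \<in> {lo a<..<hi a}}" by (intro openin_prodR proj_cont) auto
    then have "openin ?P ({y. y a \<in> {lo a<..<hi a}} \<inter> {y. \<forall>a\<in>F. lo a < y a \<and> y a < hi a})"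
      using insert by (intro openin_Int) auto
    moreover have "{y. y a \<in> {lo a<..<hi a}} \<inter> {y. \<forall>a\<in>F. lo a < y a \<and> y a < hi a}
        = {y. \<forall>a\<in>insert a F. lo a < y a \<and> y a < hi a}" by auto
    ultimately show ?case by simp
  qed
  then show ?thesis unfolding berk_top_def openin_subtopology by blast
qed

lemma bc_sub:
  assumes "\<forall>S\<in>B. S \<subseteq> X" "S \<in> bool_comb X B"
  shows "S \<subseteq> X"
  using assms(2) by induction (use assms(1) in auto)

lemma bc_X: "X \<in> bool_comb X B"
  using bool_comb.compl[OF bool_comb.empty] by simp

lemma bc_Int:
  assumes "\<forall>S\<in>B. S \<subseteq> X" "S \<in> bool_comb X B" "T \<in> bool_comb X B"
  shows "S \<inter> T \<in> bool_comb X B"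
proof -
  have "S \<inter> T = X - ((X - S) \<union> (X - T))" using bc_sub[OF assms(1,2)] bc_sub[OF assms(1,3)] by blast
  then show ?thesis using assms by (simp add: bool_comb.compl bool_comb.union)
qed

lemma bc_Union:
  assumes "finite \<F>" "\<F> \<subseteq> bool_comb X B"
  shows "\<Union>\<F> \<in> bool_comb X B"
  using assms by (induction \<F> rule: finite_induct) (auto intro: bool_comb.empty bool_comb.union)

abbreviation rcos :: "('a::comm_ring_1 \<Rightarrow> real) \<Rightarrow> real \<Rightarrow> 'a \<Rightarrow> 'a set" where
  "rcos nA \<epsilon> g \<equiv> a_r_coset (A_circ nA) (I_eps nA \<epsilon>) g"

lemma rcos_eq: "rcos nA \<epsilon> g = {h + g | h. h \<in> I_eps nA \<epsilon>}"
  unfolding a_r_coset_def' A_circ_def by auto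

lemma rcos_carrier:
  assumes "spectral_norm nA g \<le> 1"
  shows "rcos nA \<epsilon> g \<in> carrier (A_eps nA \<epsilon>)"
  unfolding A_eps_def FactRing_def A_RCOSETS_def' using assms by (auto simp: A_circ_def)

lemma red_mem:
  assumes kn: "k_alg_norm v emb nA" and y: "y \<in> berk_spectrum nA" and e: "0 < \<epsilon>"
    and g: "spectral_norm nA g \<le> 1"
  shows "rcos nA \<epsilon> g \<in> red_eps nA \<epsilon> y \<longleftrightarrow> y g < \<epsilon>"
proof
  assume "y g < \<epsilon>"
  then show "rcos nA \<epsilon> g \<in> red_eps nA \<epsilon> y" unfolding red_eps_def using g by (auto simp: A_circ_def)
next
  assume "rcos nA \<epsilon> g \<in> red_eps nA \<epsilon> y"
  then obtain a where a: "y a < \<epsilon>" "rcos nA \<epsilon> a = rcos nA \<epsilon> g"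
    unfolding red_eps_def by auto
  have "0 \<in> I_eps nA \<epsilon>" unfolding I_eps_def using spec_zero[OF knorm_snorm[OF kn]] e by simp
  then have "g \<in> rcos nA \<epsilon> g" unfolding rcos_eq by force
  then have "g \<in> rcos nA \<epsilon> a" using a(2) by simp
  then obtain h where h: "h \<in> I_eps nA \<epsilon>" "g = h + a" unfolding rcos_eq by blast
  have "y h \<le> spectral_norm nA h" by (rule berk_le_spec[OF kn y])
  then have "y h < \<epsilon>" using h(1) unfolding I_eps_def by simp
  then show "y g < \<epsilon>" using berk_nonarch[OF kn y, of h a] h(2) a(1) by simp
qed

definition condset :: "('a::comm_ring_1 \<Rightarrow> real) \<Rightarrow> real \<Rightarrow> ('a \<times> bool) set \<Rightarrow> 'a set set set" where
  "condset nA \<epsilon> L = {J \<in> Id_eps nA \<epsilon>. \<forall>(g,b)\<in>L. (rcos nA \<epsilon> g \<in> J) = b}"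

lemma condset_constructible:
  assumes "finite L" "\<forall>(g,b)\<in>L. spectral_norm nA g \<le> 1"
  shows "constructible_Id nA \<epsilon> (condset nA \<epsilon> L)"
  using assms
proof (induction L rule: finite_induct)
  case empty
  then show ?case unfolding constructible_Id_def condset_def by (simp add: bc_X)
next
  case (insert gb L)
  obtain g b where gb: "gb = (g, b)" by fastforce
  let ?X = "Id_eps nA \<epsilon>"
  let ?B = "{{J \<in> Id_eps nA \<epsilon>. g \<in> J} | g. g \<in> carrier (A_eps nA \<epsilon>)}"
  have BX: "\<forall>S\<in>?B. S \<subseteq> ?X" by auto
  have basic: "{J \<in> ?X. rcos nA \<epsilon> g \<in> J} \<in> bool_comb ?X ?B"
    using insert.prems gb rcos_carrier by (intro bool_comb.basic) auto
  define T where "T = (if b then {J \<in> ?X. rcos nA \<epsilon> g \<in> J} else ?X - {J \<in> ?X. rcos nA \<epsilon> g \<in> J})"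
  have T: "T \<in> bool_comb ?X ?B" unfolding T_def using basic by (auto intro: bool_comb.compl)
  have IH: "condset nA \<epsilon> L \<in> bool_comb ?X ?B"
    using insert unfolding constructible_Id_def by auto
  have "condset nA \<epsilon> (insert gb L) = T \<inter> condset nA \<epsilon> L"
    unfolding condset_def T_def gb by auto
  then show ?case unfolding constructible_Id_def using bc_Int[OF BX T IH] by simp
qed

lemma condset_pre:
  assumes kn: "k_alg_norm v emb nA" and y: "y \<in> berk_spectrum nA" and e: "0 < \<epsilon>"
    and L: "\<forall>(g,b)\<in>L. spectral_norm nA g \<le> 1"
    and r: "red_eps nA \<epsilon> y \<in> condset nA \<epsilon> L"
  shows "\<forall>(g,b)\<in>L. (y g < \<epsilon>) = b"
proof -
  have "(y g < \<epsilon>) = b" if gb: "(g,b) \<in> L" for g b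
  proof -
    have "spectral_norm nA g \<le> 1" using L gb by auto
    moreover have "(rcos nA \<epsilon> g \<in> red_eps nA \<epsilon> y) = b" using r gb unfolding condset_def by auto
    ultimately show ?thesis using red_mem[OF kn y e] by simp
  qed
  then show ?thesis by auto
qed

lemma condset_intro:
  assumes kn: "k_alg_norm v emb nA" and y: "y \<in> berk_spectrum nA" and e: "0 < \<epsilon>"
    and L: "\<forall>(g,b)\<in>L. spectral_norm nA g \<le> 1"
    and c: "\<forall>(g,b)\<in>L. (y g < \<epsilon>) = b" and I: "red_eps nA \<epsilon> y \<in> Id_eps nA \<epsilon>"
  shows "red_eps nA \<epsilon> y \<in> condset nA \<epsilon> L"
proof -
  have "(rcos nA \<epsilon> g \<in> red_eps nA \<epsilon> y) = b" if gb: "(g,b) \<in> L" for g b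
  proof -
    have "spectral_norm nA g \<le> 1" using L gb by auto
    moreover have "(y g < \<epsilon>) = b" using c gb by auto
    ultimately show ?thesis using red_mem[OF kn y e] by simp
  qed
  then show ?thesis using I unfolding condset_def by auto
qed

lemma constructible_sub:
  "constructible_Id nA \<epsilon> V \<Longrightarrow> V \<subseteq> Id_eps nA \<epsilon>"
  unfolding constructible_Id_def by (erule bc_sub[rotated]) auto

lemma constructible_rest:
  assumes "finite \<V>" "\<forall>V\<in>\<V>. constructible_Id nA \<epsilon> V"
  shows "constructible_Id nA \<epsilon> (Id_eps nA \<epsilon> - \<Union>\<V>)"
  using assms bc_Union[of \<V>] unfolding constructible_Id_def
  by (intro bool_comb.compl) auto

lemma thr:
  assumes kn: "k_alg_norm v emb nA" and na: "nonarch_abs v" and y: "y \<in> berk_spectrum nA"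
    and e: "e \<noteq> 0" and d: "d \<noteq> 0"
  shows "y (emb (e/d) * a) < v e \<longleftrightarrow> y a < v d"
proof -
  have vd: "0 < v d" using d v_zero_iff[OF na, of d] v_nonneg[OF na, of d] by linarith
  have ve: "0 < v e" using e v_zero_iff[OF na, of e] v_nonneg[OF na, of e] by linarith
  have "v (e/d) = v e / v d" using v_mult[OF na, of e "inverse d"] v_inverse[OF na, of d]
    by (simp add: divide_inverse)
  then have "y (emb (e/d) * a) = v e / v d * y a"
    using berkD(5)[OF y] berk_emb[OF kn na y] by simp
  moreover have "v e / v d * y a < v e \<longleftrightarrow> y a < v d"
  proof -
    have "v e / v d * y a < v e \<longleftrightarrow> (v e * y a) / v d < v e" by simp
    also have "\<dots> \<longleftrightarrow> v e * y a < v e * v d" using vd by (simp add: divide_less_eq mult.commute)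
    also have "\<dots> \<longleftrightarrow> y a < v d" using ve by simp
    finally show ?thesis .
  qed
  ultimately show ?thesis by simp
qed

lemma thr_spec:
  assumes kn: "k_alg_norm v emb nA" and na: "nonarch_abs v"
  shows "spectral_norm nA (emb (e/d) * a) = v e / v d * spectral_norm nA a"
proof -
  have "v (e/d) = v e / v d" using v_mult[OF na, of e "inverse d"] v_inverse[OF na, of d]
    by (simp add: divide_inverse)
  then show ?thesis using spec_homog[OF kn na] by simp
qed

theorem lemma5p5:
  fixes v :: "'k::field \<Rightarrow> real" and emb :: "'k \<Rightarrow> 'a::comm_ring_1"
    and nA :: "'a \<Rightarrow> real" and \<U> :: "('a \<Rightarrow> real) set set"
  assumes "nonarch_abs v" and "complete_abs v" and "nontrivial_abs v"
    and "alg_closed TYPE('k)"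
    and "strictly_affinoid v emb nA"
    and "finite \<U>" and "\<forall>U\<in>\<U>. openin (berk_top nA) U" and "\<Union>\<U> = berk_spectrum nA"
  shows "\<exists>\<epsilon>0>0. \<forall>\<epsilon>. \<epsilon> \<in> v ` (UNIV - {0}) \<and> \<epsilon> < \<epsilon>0 \<longrightarrow>
           (\<exists>\<V>. finite \<V> \<and> (\<forall>V\<in>\<V>. constructible_Id nA \<epsilon> V) \<and> \<Union>\<V> = Id_eps nA \<epsilon>
              \<and> (\<forall>V\<in>\<V>. \<exists>U\<in>\<U>. {x \<in> berk_spectrum nA. red_eps nA \<epsilon> x \<in> V} \<subseteq> U))"
proof -
  have kn: "k_alg_norm v emb nA" using assms(5) unfolding strictly_affinoid_def by blast
  have na: "nonarch_abs v" by (rule assms(1))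
  let ?M = "berk_spectrum nA"
  define \<Gamma> where "\<Gamma> = v ` (UNIV - {0})"
  have \<Gamma>pos: "0 < t" if "t \<in> \<Gamma>" for t
    using that v_zero_iff[OF na] v_nonneg[OF na] unfolding \<Gamma>_def by (force simp: less_le)
  have dense: "\<exists>t. t \<in> \<Gamma> \<and> \<alpha> < t \<and> t < \<beta>" if "0 \<le> \<alpha>" "\<alpha> < \<beta>" for \<alpha> \<beta>
    using value_dense[OF na assms(3) assms(4) that] unfolding \<Gamma>_def by blast
  have "\<forall>x\<in>?M. \<exists>U. U \<in> \<U> \<and> x \<in> U" using assms(8) by blast
  from bchoice[OF this] obtain U where U0: "\<forall>x\<in>?M. U x \<in> \<U> \<and> x \<in> U x" by (elim exE) blast
  have U: "U x \<in> \<U> \<and> x \<in> U x" if "x \<in> ?M" for x using U0 that by (rule bspec)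
  have "\<forall>x\<in>?M. \<exists>Fd. finite (fst Fd) \<and> 0 < snd Fd \<and>
          {y \<in> ?M. \<forall>a\<in>fst Fd. \<bar>y a - x a\<bar> < snd Fd} \<subseteq> U x"
  proof
    fix x assume x: "x \<in> ?M"
    then have "openin (berk_top nA) (U x)" "x \<in> U x" using U assms(7) by auto
    from berk_nbhd[OF this] show "\<exists>Fd. finite (fst Fd) \<and> 0 < snd Fd \<and>
          {y \<in> ?M. \<forall>a\<in>fst Fd. \<bar>y a - x a\<bar> < snd Fd} \<subseteq> U x" by auto
  qed
  from bchoice[OF this] obtain Fd where Fd0: "\<forall>x\<in>?M. finite (fst (Fd x)) \<and> 0 < snd (Fd x) \<and>
          {y \<in> ?M. \<forall>a\<in>fst (Fd x). \<bar>y a - x a\<bar> < snd (Fd x)} \<subseteq> U x" by (elim exE) blast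
  have Fd: "finite (fst (Fd x)) \<and> 0 < snd (Fd x) \<and>
          {y \<in> ?M. \<forall>a\<in>fst (Fd x). \<bar>y a - x a\<bar> < snd (Fd x)} \<subseteq> U x" if "x \<in> ?M" for x
    using Fd0 that by (rule bspec)
  define F where "F x = fst (Fd x)" for x
  define \<delta> where "\<delta> x = snd (Fd x)" for x
  have Fx: "finite (F x)" "0 < \<delta> x" "{y \<in> ?M. \<forall>a\<in>F x. \<bar>y a - x a\<bar> < \<delta> x} \<subseteq> U x" if "x \<in> ?M" for x
    using Fd[OF that] unfolding F_def \<delta>_def by auto
  define s where "s x a = (SOME t. t \<in> \<Gamma> \<and> x a < t \<and> t < x a + \<delta> x)" for x a
  have s: "s x a \<in> \<Gamma> \<and> x a < s x a \<and> s x a < x a + \<delta> x" if "x \<in> ?M" for x a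
    unfolding s_def
    by (rule someI_ex, rule dense) (use berkD(1)[OF that, of a] Fx(2)[OF that] in auto)
  define r where "r x a = (SOME t. t \<in> \<Gamma> \<and> max 0 (x a - \<delta> x) < t \<and> t < x a)" for x a
  have r: "r x a \<in> \<Gamma> \<and> max 0 (x a - \<delta> x) < r x a \<and> r x a < x a" if "x \<in> ?M" "0 < x a" for x a
    unfolding r_def
    by (rule someI_ex, rule dense) (use that Fx(2)[OF that(1)] in auto)
  define lo where "lo x a = (if 0 < x a then r x a else -1)" for x a
  define Ob where "Ob x = {y \<in> ?M. \<forall>a\<in>F x. lo x a < y a \<and> y a < s x a}" for x
  have Oopen: "openin (berk_top nA) (Ob x)" if "x \<in> ?M" for x
    unfolding Ob_def using berk_open_box Fx(1)[OF that] by blast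
  have xO: "x \<in> Ob x" if "x \<in> ?M" for x
  proof -
    have "lo x a < x a \<and> x a < s x a" for a
      using s[OF that, of a] r[OF that, of a] berkD(1)[OF that, of a] unfolding lo_def by auto
    then show ?thesis unfolding Ob_def using that by auto
  qed
  have comp: "compactin (berk_top nA) ?M" by (rule berk_compact[OF kn])
  have "(\<forall>B\<in>Ob ` ?M. openin (berk_top nA) B) \<and> ?M \<subseteq> \<Union>(Ob ` ?M)" using Oopen xO by blast
  then obtain \<O> where \<O>: "finite \<O>" "\<O> \<subseteq> Ob ` ?M" "?M \<subseteq> \<Union>\<O>"
    using comp unfolding compactin_def by meson
  then obtain X0 where X0: "X0 \<subseteq> ?M" "finite X0" "\<O> = Ob ` X0"
    by (meson finite_subset_image)
  have cover: "\<exists>x\<in>X0. y \<in> Ob x" if "y \<in> ?M" for y using \<O>(3) X0(3) that by blast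
  define TH where "TH = (\<Union>x\<in>X0. s x ` F x \<union> r x ` {a\<in>F x. 0 < x a})"
  define NS where "NS = (\<Union>x\<in>X0. spectral_norm nA ` F x)"
  have finTH: "finite TH" unfolding TH_def using X0 Fx(1) by auto
  have finNS: "finite NS" unfolding NS_def using X0 Fx(1) by auto
  have TH\<Gamma>: "t \<in> \<Gamma>" if "t \<in> TH" for t using that s r X0(1) unfolding TH_def by blast
  define m where "m = Min (insert 1 TH)"
  define P where "P = Max (insert 0 NS)"
  have m0: "0 < m" unfolding m_def using finTH TH\<Gamma> \<Gamma>pos by auto
  have mle: "m \<le> t" if "t \<in> TH" for t unfolding m_def using finTH that by auto
  have P0: "0 \<le> P" unfolding P_def using finNS by auto
  have Pge: "spectral_norm nA a \<le> P" if "x \<in> X0" "a \<in> F x" for x a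
    unfolding P_def NS_def using finNS that NS_def by (intro Max_ge) auto
  define \<epsilon>0 where "\<epsilon>0 = m / (P + 1)"
  have \<epsilon>00: "0 < \<epsilon>0" unfolding \<epsilon>0_def using m0 P0 by simp
  have Mne: "?M \<noteq> {}" by (rule berk_nonempty[OF kn])
  then have Une: "\<U> \<noteq> {}" using assms(8) by auto
  show ?thesis
  proof (intro exI[of _ \<epsilon>0] conjI allI impI \<epsilon>00)
    fix \<epsilon> assume "\<epsilon> \<in> v ` (UNIV - {0}) \<and> \<epsilon> < \<epsilon>0"
    then obtain e where e: "e \<noteq> 0" "v e = \<epsilon>" and \<epsilon>lt: "\<epsilon> < \<epsilon>0" by auto
    have \<epsilon>pos: "0 < \<epsilon>" using \<Gamma>pos e unfolding \<Gamma>_def by blast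
    define dd where "dd t = (SOME d. d \<noteq> 0 \<and> v d = t)" for t
    have dd: "dd t \<noteq> 0 \<and> v (dd t) = t" if "t \<in> \<Gamma>" for t
      unfolding dd_def by (rule someI_ex) (use that \<Gamma>_def in auto)
    define G where "G t a = emb (e / dd t) * a" for t a
    define S where "S x = (\<lambda>a. (G (s x a) a, True)) ` F x \<union> (\<lambda>a. (G (r x a) a, False)) ` {a\<in>F x. 0 < x a}" for x
    have Sfin: "finite (S x)" if "x \<in> X0" for x unfolding S_def using Fx(1) X0(1) that by auto
    have small: "spectral_norm nA (G t a) \<le> 1" if "x \<in> X0" "t \<in> TH" "a \<in> F x" for x t a
    proof -
      have t: "t \<in> \<Gamma>" "0 < t" using TH\<Gamma> \<Gamma>pos that by auto
      have "spectral_norm nA (G t a) = \<epsilon> / t * spectral_norm nA a"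
        unfolding G_def using thr_spec[OF kn na] dd[OF t(1)] e by simp
      also have "\<dots> \<le> 1"
      proof -
        have "\<epsilon> * spectral_norm nA a \<le> \<epsilon> * P" using Pge[OF that(1,3)] \<epsilon>pos by simp
        also have "\<dots> < \<epsilon> * (P + 1)" using \<epsilon>pos by simp
        also have "\<dots> < m" using \<epsilon>lt P0 unfolding \<epsilon>0_def by (simp add: field_simps)
        also have "\<dots> \<le> t" by (rule mle[OF that(2)])
        finally show ?thesis using t(2) by (simp add: field_simps)
      qed
      finally show ?thesis .
    qed
    have Sok: "\<forall>(g,b)\<in>S x. spectral_norm nA g \<le> 1" if "x \<in> X0" for x
      using small[OF that] that unfolding S_def TH_def by blast
    have Gcond: "(y (G t a) < \<epsilon>) \<longleftrightarrow> y a < t" if "y \<in> ?M" "t \<in> \<Gamma>" for y t a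
      unfolding G_def using thr[OF kn na that(1) e(1), of "dd t" a] dd[OF that(2)] e(2) by simp
    define \<V>0 where "\<V>0 = (\<lambda>x. condset nA \<epsilon> (S x)) ` X0"
    define V0 where "V0 = Id_eps nA \<epsilon> - \<Union>\<V>0"
    have cons0: "\<forall>V\<in>\<V>0. constructible_Id nA \<epsilon> V"
    proof
      fix V assume "V \<in> \<V>0"
      then obtain x where x: "x \<in> X0" "V = condset nA \<epsilon> (S x)" unfolding \<V>0_def by blast
      show "constructible_Id nA \<epsilon> V" unfolding x(2) by (rule condset_constructible[OF Sfin[OF x(1)] Sok[OF x(1)]])
    qed
    have fin0: "finite \<V>0" unfolding \<V>0_def using X0 by simp
    show "\<exists>\<V>. finite \<V> \<and> (\<forall>V\<in>\<V>. constructible_Id nA \<epsilon> V) \<and> \<Union>\<V> = Id_eps nA \<epsilon>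
              \<and> (\<forall>V\<in>\<V>. \<exists>U\<in>\<U>. {x \<in> berk_spectrum nA. red_eps nA \<epsilon> x \<in> V} \<subseteq> U)"
    proof (intro exI[of _ "insert V0 \<V>0"] conjI ballI)
      show "finite (insert V0 \<V>0)" using fin0 by simp
    next
      fix V assume "V \<in> insert V0 \<V>0"
      then show "constructible_Id nA \<epsilon> V"
        using cons0 constructible_rest[OF fin0 cons0] V0_def by auto
    next
      have "\<Union>\<V>0 \<subseteq> Id_eps nA \<epsilon>" unfolding \<V>0_def condset_def by auto
      then show "\<Union>(insert V0 \<V>0) = Id_eps nA \<epsilon>" unfolding V0_def by auto
    next
      fix V assume V: "V \<in> insert V0 \<V>0"
      show "\<exists>U\<in>\<U>. {x \<in> berk_spectrum nA. red_eps nA \<epsilon> x \<in> V} \<subseteq> U"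
      proof (cases "V = V0")
        case True
        have "{y \<in> ?M. red_eps nA \<epsilon> y \<in> V0} = {}"
        proof (rule ccontr)
          assume "{y \<in> ?M. red_eps nA \<epsilon> y \<in> V0} \<noteq> {}"
          then obtain y where y: "y \<in> ?M" "red_eps nA \<epsilon> y \<in> V0" by blast
          then obtain x where x: "x \<in> X0" "y \<in> Ob x" using cover by blast
          have xM: "x \<in> ?M" using x X0 by blast
          have "\<forall>(g,b)\<in>S x. (y g < \<epsilon>) = b"
          proof -
            have c1: "y (G (s x a) a) < \<epsilon>" if "a \<in> F x" for a
              using Gcond[OF y(1) conjunct1[OF s[OF xM]]] x(2) that unfolding Ob_def by auto
            have c2: "\<not> y (G (r x a) a) < \<epsilon>" if "a \<in> F x" "0 < x a" for a
              using Gcond[OF y(1) conjunct1[OF r[OF xM that(2)]]] x(2) that unfolding Ob_def lo_def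
              by auto
            show ?thesis unfolding S_def using c1 c2 by auto
          qed
          moreover have "red_eps nA \<epsilon> y \<in> Id_eps nA \<epsilon>" using y(2) V0_def by auto
          ultimately have "red_eps nA \<epsilon> y \<in> condset nA \<epsilon> (S x)"
            using condset_intro[OF kn y(1) \<epsilon>pos Sok[OF x(1)]] by blast
          then show False using y(2) x(1) unfolding V0_def \<V>0_def by blast
        qed
        then show ?thesis using True Une by auto
      next
        case False
        then obtain x where x: "x \<in> X0" "V = condset nA \<epsilon> (S x)" using V unfolding \<V>0_def by auto
        have xM: "x \<in> ?M" using x X0 by blast
        have "{y \<in> ?M. red_eps nA \<epsilon> y \<in> V} \<subseteq> U x"
        proof
          fix y assume "y \<in> {y \<in> ?M. red_eps nA \<epsilon> y \<in> V}"
          then have y: "y \<in> ?M" "red_eps nA \<epsilon> y \<in> condset nA \<epsilon> (S x)" using x by auto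
          have cnd: "\<forall>(g,b)\<in>S x. (y g < \<epsilon>) = b"
            by (rule condset_pre[OF kn y(1) \<epsilon>pos Sok[OF x(1)] y(2)])
          have "\<bar>y a - x a\<bar> < \<delta> x" if a: "a \<in> F x" for a
          proof -
            have "(G (s x a) a, True) \<in> S x" using a unfolding S_def by auto
            then have "y (G (s x a) a) < \<epsilon>" using cnd by auto
            then have up: "y a < x a + \<delta> x"
              using Gcond[OF y(1) conjunct1[OF s[OF xM]]] s[OF xM, of a] by auto
            have "x a - \<delta> x < y a"
            proof (cases "0 < x a")
              case True
              then have "(G (r x a) a, False) \<in> S x" using a unfolding S_def by auto
              then have "\<not> y (G (r x a) a) < \<epsilon>" using cnd by auto
              then show ?thesis
                using Gcond[OF y(1) conjunct1[OF r[OF xM True]]] r[OF xM True] by auto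
            next
              case False
              then show ?thesis using berkD(1)[OF y(1), of a] berkD(1)[OF xM, of a] Fx(2)[OF xM] by auto
            qed
            then show ?thesis using up by auto
          qed
          then show "y \<in> U x" using Fx(3)[OF xM] y(1) by blast
        qed
        then show ?thesis using U[OF xM] by blast
      qed
    qed
  qed
qed

end
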